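(* Consider a VCG combinatorial auction with a set $G$ of items, $|G|\ge3$, and a set $N$ of agents, $|N|\ge2$, and let $s=(s_1,\dots,s_n)$ be an efficient ex-post equilibrium. Then there exists a type profile $\theta=(\theta_1,\dots,\theta_n)$ and an agent $i\in N$ such that for every pair of bundles $X,Y\in2^G$ with $X\subset Y$ (proper inclusion), $s_i(X,\theta_i)\ne s_i(Y,\theta_i)$.
   Context: Combinatorial auction: items $G$, agents $N$; an outcome assigns pairwise disjoint bundles $o_i\subseteq G$. Types: valuations $v_i(\cdot,\theta_i):2^G\to\mathbb{R}_{\ge0}$ with $v_i(\emptyset,\theta_i)=0$ and monotone under inclusion; utilities quasilinear. VCG mechanism (direct): each agent reports a valuation (a bid $x_i(B)$ for each bundle $B$); an outcome maximizing $\sum_i x_i(o_i)$ is chosen; agent $i$ pays $\max_{o'}\sum_{j\ne i}x_j(o'_j)-\sum_{j\ne i}x_j(o_j)$. A strategy $s_i$ maps agent $i$'s type to a report; $s_i(X,\theta_i)$ denotes the bid of agent $i$ with type $\theta_i$ on bundle $X$. $s$ is an ex-post equilibrium if for every type profile $\theta$ and agent $i$, $s_i(\theta_i)$ is a best response to $s_{-i}(\theta_{-i})$; it is efficient if for every type profile the chosen outcome maximizes total true value. *)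

theory Defs
  imports Complex_Main
begin

definition valuation :: "'b set \<Rightarrow> ('b set \<Rightarrow> real) \<Rightarrow> bool" where
  "valuation G v \<longleftrightarrow> v {} = 0 \<and> (\<forall>B. B \<subseteq> G \<longrightarrow> 0 \<le> v B)
     \<and> (\<forall>A B. A \<subseteq> B \<and> B \<subseteq> G \<longrightarrow> v A \<le> v B)
     \<and> (\<forall>B. \<not> B \<subseteq> G \<longrightarrow> v B = 0)"

definition outcomes :: "'a set \<Rightarrow> 'b set \<Rightarrow> ('a \<Rightarrow> 'b set) set" where
  "outcomes N G = {ou. (\<forall>i\<in>N. ou i \<subseteq> G) \<and> (\<forall>i. i \<notin> N \<longrightarrow> ou i = {})
                     \<and> (\<forall>i\<in>N. \<forall>j\<in>N. i \<noteq> j \<longrightarrow> ou i \<inter> ou j = {})}"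

definition welfare :: "'a set \<Rightarrow> ('a \<Rightarrow> 'b set \<Rightarrow> real) \<Rightarrow> ('a \<Rightarrow> 'b set) \<Rightarrow> real" where
  "welfare M x ou = (\<Sum>i\<in>M. x i (ou i))"

definition vcg_rule :: "'a set \<Rightarrow> 'b set \<Rightarrow> (('a \<Rightarrow> 'b set \<Rightarrow> real) \<Rightarrow> ('a \<Rightarrow> 'b set)) \<Rightarrow> bool" where
  "vcg_rule N G f \<longleftrightarrow> (\<forall>x. (\<forall>i\<in>N. valuation G (x i)) \<longrightarrow>
      f x \<in> outcomes N G \<and> (\<forall>ou\<in>outcomes N G. welfare N x ou \<le> welfare N x (f x)))"

definition vcg_payment :: "'a set \<Rightarrow> 'b set \<Rightarrow> ('a \<Rightarrow> 'b set \<Rightarrow> real) \<Rightarrow> ('a \<Rightarrow> 'b set) \<Rightarrow> 'a \<Rightarrow> real" where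
  "vcg_payment N G x ou i =
     Max ((\<lambda>ou'. welfare (N - {i}) x ou') ` outcomes N G) - welfare (N - {i}) x ou"

definition vcg_utility :: "'a set \<Rightarrow> 'b set \<Rightarrow> (('a \<Rightarrow> 'b set \<Rightarrow> real) \<Rightarrow> ('a \<Rightarrow> 'b set))
    \<Rightarrow> ('b set \<Rightarrow> real) \<Rightarrow> ('a \<Rightarrow> 'b set \<Rightarrow> real) \<Rightarrow> 'a \<Rightarrow> real" where
  "vcg_utility N G f v x i = v (f x i) - vcg_payment N G x (f x) i"

definition type_profile :: "'a set \<Rightarrow> 'b set \<Rightarrow> ('a \<Rightarrow> 'b set \<Rightarrow> real) \<Rightarrow> bool" where
  "type_profile N G \<theta> \<longleftrightarrow> (\<forall>i\<in>N. valuation G (\<theta> i))"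

definition strategy_profile :: "'a set \<Rightarrow> 'b set \<Rightarrow> ('a \<Rightarrow> ('b set \<Rightarrow> real) \<Rightarrow> ('b set \<Rightarrow> real)) \<Rightarrow> bool" where
  "strategy_profile N G s \<longleftrightarrow> (\<forall>i\<in>N. \<forall>v. valuation G v \<longrightarrow> valuation G (s i v))"

definition ex_post_equilibrium ::
  "'a set \<Rightarrow> 'b set \<Rightarrow> (('a \<Rightarrow> 'b set \<Rightarrow> real) \<Rightarrow> ('a \<Rightarrow> 'b set))
    \<Rightarrow> ('a \<Rightarrow> ('b set \<Rightarrow> real) \<Rightarrow> ('b set \<Rightarrow> real)) \<Rightarrow> bool" where
  "ex_post_equilibrium N G f s \<longleftrightarrow> strategy_profile N G s \<and>
     (\<forall>\<theta>. type_profile N G \<theta> \<longrightarrow> (\<forall>i\<in>N. \<forall>r. valuation G r \<longrightarrow>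
        vcg_utility N G f (\<theta> i) ((\<lambda>j. s j (\<theta> j))(i := r)) i
          \<le> vcg_utility N G f (\<theta> i) (\<lambda>j. s j (\<theta> j)) i))"

definition efficient ::
  "'a set \<Rightarrow> 'b set \<Rightarrow> (('a \<Rightarrow> 'b set \<Rightarrow> real) \<Rightarrow> ('a \<Rightarrow> 'b set))
    \<Rightarrow> ('a \<Rightarrow> ('b set \<Rightarrow> real) \<Rightarrow> ('b set \<Rightarrow> real)) \<Rightarrow> bool" where
  "efficient N G f s \<longleftrightarrow> (\<forall>\<theta>. type_profile N G \<theta> \<longrightarrow>
     (\<forall>ou\<in>outcomes N G. welfare N \<theta> ou \<le> welfare N \<theta> (f (\<lambda>j. s j (\<theta> j)))))"

end

theory Submission
  imports Defs
begin

lemma key: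
  assumes fin: "finite G" and XY: "X \<subset> Y" "Y \<subseteq> G" and AB: "A \<subseteq> G" "B \<subseteq> G" "A \<inter> B = {}"
    and ge: "2 * real (card (A \<inter> (G - Y))) + (if G - X \<subseteq> A then 1/2 else 0) + real (card B)
             \<ge> 2 * real (card (G - Y)) + real (card Y)"
  shows "A = G - Y \<and> B = Y"
proof -
  have fA: "finite A" using fin AB finite_subset by blast
  have fB: "finite B" using fin AB finite_subset by blast
  have cB: "card B \<le> card G - card A"
  proof -
    have "B \<subseteq> G - A" using AB by blast
    hence "card B \<le> card (G - A)" using fin by (simp add: card_mono)
    also have "card (G - A) = card G - card A" using fin AB by (simp add: card_Diff_subset fA)
    finally show ?thesis .
  qed
  have cA: "card A = card (A \<inter> (G - Y)) + card (A \<inter> Y)"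
  proof -
    have "A = (A \<inter> (G - Y)) \<union> (A \<inter> Y)" using AB by blast
    hence "card A = card ((A \<inter> (G - Y)) \<union> (A \<inter> Y))" by simp
    also have "\<dots> = card (A \<inter> (G - Y)) + card (A \<inter> Y)"
      by (rule card_Un_disjoint) (use fA in auto)
    finally show ?thesis .
  qed
  have cG: "card G = card (G - Y) + card Y"
    using fin XY by (metis card_Diff_subset finite_subset le_add_diff_inverse2 card_mono)
  have am: "card (A \<inter> (G - Y)) \<le> card (G - Y)" using fin by (intro card_mono) auto
  have cAG: "card A \<le> card G" using fin AB by (simp add: card_mono)
  show ?thesis
  proof (cases "G - X \<subseteq> A")
    case True
    obtain z where "z \<in> Y" "z \<notin> X" using XY by blast
    hence "z \<in> A \<inter> Y" using True XY by blast
    hence "card (A \<inter> Y) \<ge> 1" using fA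
      by (metis One_nat_def Suc_leI card_gt_0_iff empty_iff finite_Int)
    with ge True cB cA cG am cAG show ?thesis by auto
  next
    case False
    from ge False cB cA cG am cAG have
      a0: "card (A \<inter> Y) = 0" and am2: "card (A \<inter> (G - Y)) = card (G - Y)"
      and bq: "card B = card G - card A" by auto
    have "A \<inter> Y = {}" using a0 fA by simp
    moreover have "A \<inter> (G - Y) = G - Y" using am2 fin
      by (metis Diff_subset Int_lower2 card_subset_eq finite_subset)
    ultimately have Aeq: "A = G - Y" using AB by blast
    have "B \<subseteq> Y" using AB Aeq by blast
    moreover have "card B = card Y" using bq cG Aeq by simp
    ultimately have "B = Y" using fin XY by (metis card_subset_eq finite_subset)
    with Aeq show ?thesis by simp
  qed
qed

theorem proposition6:
  fixes N :: "'a set" and G :: "'b set"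
    and f :: "('a \<Rightarrow> 'b set \<Rightarrow> real) \<Rightarrow> ('a \<Rightarrow> 'b set)"
    and s :: "'a \<Rightarrow> ('b set \<Rightarrow> real) \<Rightarrow> ('b set \<Rightarrow> real)"
  assumes "finite G" and "finite N" and "card G \<ge> 3" and "card N \<ge> 2"
    and "vcg_rule N G f"
    and "ex_post_equilibrium N G f s"
    and "efficient N G f s"
  shows "\<exists>\<theta>. type_profile N G \<theta> \<and>
           (\<exists>i\<in>N. \<forall>X Y. X \<subset> Y \<and> Y \<subseteq> G \<longrightarrow> s i (\<theta> i) X \<noteq> s i (\<theta> i) Y)"
proof -
  note fin = assms(1)
  obtain i1 i2 where i12: "i1 \<in> N" "i2 \<in> N" "i1 \<noteq> i2"
  proof -
    have "\<not> card N \<le> Suc 0" using assms(4) by simp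
    then show ?thesis using that card_le_Suc0_iff_eq[OF assms(2)] by blast
  qed
  define c :: "'b set \<Rightarrow> real" where "c B = (if B \<subseteq> G then real (card B) else 0)" for B
  have vc: "valuation G c"
    unfolding valuation_def c_def using fin
    by (auto intro: card_mono finite_subset)
  define th0 :: "'a \<Rightarrow> 'b set \<Rightarrow> real" where "th0 j = (if j = i2 then c else (\<lambda>_. 0))" for j
  have v0: "valuation G (\<lambda>_. 0)" unfolding valuation_def by simp
  have tp0: "type_profile N G th0" unfolding type_profile_def th0_def using vc v0 by auto
  have sp: "strategy_profile N G s" using assms(6) ex_post_equilibrium_def by blast
  show ?thesis
  proof (intro exI conjI bexI allI impI)
    show "type_profile N G th0" by (rule tp0)
    show "i2 \<in> N" by (rule i12(2))
    fix X Y assume XY0: "X \<subset> Y \<and> Y \<subseteq> G"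
    hence XY: "X \<subset> Y" "Y \<subseteq> G" by auto
    show "s i2 (th0 i2) X \<noteq> s i2 (th0 i2) Y"
    proof
    assume "s i2 (th0 i2) X = s i2 (th0 i2) Y"
    hence flat: "s i2 c X = s i2 c Y" by (simp add: th0_def)
    have GX: "G - X \<noteq> {}" using XY by blast
    define t1 :: "'b set \<Rightarrow> real" where
      "t1 B = (if B \<subseteq> G then 2 * real (card (B \<inter> (G - Y))) + (if G - X \<subseteq> B then 1/2 else 0) else 0)" for B
    have vt1: "valuation G t1"
      unfolding valuation_def
    proof (intro conjI allI impI)
      show "t1 {} = 0" using GX by (simp add: t1_def)
      fix B assume "B \<subseteq> G" thus "0 \<le> t1 B" by (simp add: t1_def)
    next
      fix A B assume h: "A \<subseteq> B \<and> B \<subseteq> G"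
      have "card (A \<inter> (G - Y)) \<le> card (B \<inter> (G - Y))" using h fin
        by (intro card_mono) (auto intro: finite_subset)
      thus "t1 A \<le> t1 B" using h by (auto simp: t1_def)
    next
      fix B assume "\<not> B \<subseteq> G" thus "t1 B = 0" by (simp add: t1_def)
    qed
    define th :: "'a \<Rightarrow> 'b set \<Rightarrow> real" where
      "th j = (if j = i1 then t1 else if j = i2 then c else (\<lambda>_. 0))" for j
    have tp: "type_profile N G th" unfolding type_profile_def th_def using vc v0 vt1 by auto
    define b where "b = (\<lambda>j. s j (th j))"
    have vb: "\<forall>j\<in>N. valuation G (b j)" using sp tp unfolding b_def strategy_profile_def type_profile_def by blast
    define os where "os = f b"
    have os_out: "os \<in> outcomes N G" using assms(5) vb unfolding vcg_rule_def os_def by blast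
    have eff: "\<forall>ou\<in>outcomes N G. welfare N th ou \<le> welfare N th os"
      using assms(7) tp unfolding efficient_def os_def b_def by blast
    have wth: "welfare N th ou = t1 (ou i1) + c (ou i2)" for ou
    proof -
      have "welfare N th ou = (\<Sum>j\<in>N. (if j = i1 then t1 (ou i1) else 0) + (if j = i2 then c (ou i2) else 0))"
        unfolding welfare_def by (rule sum.cong) (use i12 in \<open>auto simp: th_def\<close>)
      also have "\<dots> = t1 (ou i1) + c (ou i2)"
        using i12 assms(2) by (simp add: sum.distrib)
      finally show ?thesis .
    qed
    define oh where "oh = (\<lambda>j. if j = i1 then G - Y else if j = i2 then Y else {})"
    have oh_out: "oh \<in> outcomes N G" unfolding outcomes_def oh_def using XY i12 by auto
    define alt where "alt = (\<lambda>j. if j = i1 then G - X else if j = i2 then X else {})"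
    have alt_out: "alt \<in> outcomes N G" unfolding outcomes_def alt_def using XY i12 by auto
    have osG: "\<forall>j\<in>N. os j \<subseteq> G" and osN: "\<forall>j. j \<notin> N \<longrightarrow> os j = {}"
      and osD: "\<forall>i\<in>N. \<forall>j\<in>N. i \<noteq> j \<longrightarrow> os i \<inter> os j = {}"
      using os_out unfolding outcomes_def by auto
    have "welfare N th oh \<le> welfare N th os" using eff oh_out by blast
    hence ge: "2 * real (card (os i1 \<inter> (G - Y))) + (if G - X \<subseteq> os i1 then 1/2 else 0) + real (card (os i2))
             \<ge> 2 * real (card (G - Y)) + real (card Y)"
      using XY osG i12 unfolding wth by (auto simp: oh_def t1_def c_def Int_absorb1 split: if_splits)
    have osv: "os i1 = G - Y \<and> os i2 = Y"
      by (rule key[OF fin XY]) (use osG osD i12 ge in auto)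
    have os_other: "os j = {}" if "j \<noteq> i1" "j \<noteq> i2" for j
    proof (cases "j \<in> N")
      case True
      have "os j \<inter> os i1 = {}" "os j \<inter> os i2 = {}" using osD True i12 that by auto
      thus ?thesis using osv osG True by blast
    qed (use osN in auto)
    have wm: "welfare (N - {i1}) b ou = b i2 (ou i2)" if "\<forall>j. j \<noteq> i1 \<and> j \<noteq> i2 \<longrightarrow> ou j = {}" for ou
    proof -
      have "welfare (N - {i1}) b ou = (\<Sum>j\<in>N - {i1}. if j = i2 then b i2 (ou i2) else 0)"
        unfolding welfare_def by (rule sum.cong) (use that vb in \<open>auto simp: valuation_def\<close>)
      also have "\<dots> = b i2 (ou i2)" using i12 assms(2) by simp
      finally show ?thesis .
    qed
    define x' where "x' = b(i1 := t1)"
    have vx': "\<forall>j\<in>N. valuation G (x' j)" using vb vt1 unfolding x'_def by auto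
    have wx': "welfare (N - {i1}) x' = welfare (N - {i1}) b"
      unfolding welfare_def x'_def by (intro ext sum.cong) auto
    have wsplit: "welfare N x' ou = t1 (ou i1) + welfare (N - {i1}) b ou" for ou
      using i12 assms(2) unfolding wx'[symmetric] unfolding welfare_def
      by (simp add: sum.remove x'_def)
    have bx: "x' = (\<lambda>j. s j (th j))(i1 := t1)" unfolding x'_def b_def ..
    have eq: "vcg_utility N G f (th i1) x' i1 \<le> vcg_utility N G f (th i1) b i1"
      using assms(6) tp i12 vt1 unfolding ex_post_equilibrium_def bx b_def by blast
    hence eq2: "t1 (f x' i1) + welfare (N - {i1}) b (f x') \<le> t1 (os i1) + welfare (N - {i1}) b os"
      unfolding vcg_utility_def vcg_payment_def wx' os_def by (simp add: th_def)
    have "welfare N x' alt \<le> welfare N x' (f x')" using assms(5) vx' alt_out unfolding vcg_rule_def by blast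
    hence "t1 (alt i1) + welfare (N - {i1}) b alt \<le> t1 (os i1) + welfare (N - {i1}) b os"
      using eq2 unfolding wsplit by linarith
    moreover have "welfare (N - {i1}) b alt = b i2 X" by (subst wm) (use i12 in \<open>auto simp: alt_def\<close>)
    moreover have "welfare (N - {i1}) b os = b i2 Y" using osv by (subst wm) (auto simp: os_other)
    moreover have "b i2 = s i2 c" unfolding b_def th_def using i12 by simp
    moreover have "t1 (alt i1) = 2 * real (card (G - Y)) + 1/2"
      using XY by (auto simp: alt_def t1_def intro!: arg_cong[where f=card])
    moreover have "t1 (os i1) = 2 * real (card (G - Y))"
      using XY osv by (auto simp: t1_def Int_absorb1)
    ultimately show False using flat by simp
  qed
  qed
qed

end
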